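(* Let $\nu\ge1$, $d:\mathbb{Z}^\nu\to\mathbb{C}$ bounded, $J=J_0+D$ on $\ell^2(\mathbb{Z}^\nu)$. If $\Im(d(k))\to0$ as $\|k\|_1\to\infty$, then every boundary eigenvalue of $J$ is real.
   Context: $\|k\|_1=\sum_{j=1}^\nu|k_j|$. $J_0$ is the discrete Laplacian on $\ell^2(\mathbb{Z}^\nu)$: $(J_0u)(k)=\sum_{l\in\mathbb{Z}^\nu:\|l\|_1=1}u(k+l)$. $D$ is multiplication by $d$. The numerical range is $\operatorname{Num}(J)=\{\langle Ju,u\rangle:\|u\|=1\}$, and a boundary eigenvalue of $J$ is an eigenvalue of $J$ lying in the topological boundary of $\operatorname{Num}(J)$. *)

theory Defs
  imports "HOL-Analysis.Analysis"
begin

text \<open>Lattice points of Z^nu are modelled as int^'n with 'n a finite type, nu = CARD('n) >= 1.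
  Vectors of l^2(Z^nu) are functions u :: int^'n => complex that are square summable.\<close>

definition norm1 :: "int ^ 'n \<Rightarrow> int" where
  "norm1 k = (\<Sum>j\<in>UNIV. \<bar>k $ j\<bar>)"

definition l2 :: "(int ^ 'n \<Rightarrow> complex) set" where
  "l2 = {u. (\<lambda>k. (cmod (u k))\<^sup>2) summable_on UNIV}"

definition l2_inner :: "(int ^ 'n \<Rightarrow> complex) \<Rightarrow> (int ^ 'n \<Rightarrow> complex) \<Rightarrow> complex" where
  "l2_inner u v = (\<Sum>\<^sub>\<infinity>k. u k * cnj (v k))"

definition l2_norm :: "(int ^ 'n \<Rightarrow> complex) \<Rightarrow> real" where
  "l2_norm u = sqrt (\<Sum>\<^sub>\<infinity>k. (cmod (u k))\<^sup>2)"

definition J0 :: "(int ^ 'n \<Rightarrow> complex) \<Rightarrow> (int ^ 'n \<Rightarrow> complex)" where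
  "J0 u = (\<lambda>k. \<Sum>l\<in>{l. norm1 l = 1}. u (k + l))"

definition Jop :: "(int ^ 'n \<Rightarrow> complex) \<Rightarrow> (int ^ 'n \<Rightarrow> complex) \<Rightarrow> (int ^ 'n \<Rightarrow> complex)" where
  "Jop d u = (\<lambda>k. J0 u k + d k * u k)"

definition numerical_range :: "(int ^ 'n \<Rightarrow> complex) \<Rightarrow> complex set" where
  "numerical_range d = {l2_inner (Jop d u) u | u. u \<in> l2 \<and> l2_norm u = 1}"

definition is_eigenvalue :: "(int ^ 'n \<Rightarrow> complex) \<Rightarrow> complex \<Rightarrow> bool" where
  "is_eigenvalue d c \<longleftrightarrow> (\<exists>u\<in>l2. u \<noteq> (\<lambda>_. 0) \<and> Jop d u = (\<lambda>k. c * u k))"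

definition boundary_eigenvalue :: "(int ^ 'n \<Rightarrow> complex) \<Rightarrow> complex \<Rightarrow> bool" where
  "boundary_eigenvalue d c \<longleftrightarrow> is_eigenvalue d c \<and> c \<in> frontier (numerical_range d)"

end

theory Submission
  imports Defs
begin

lemma norm1_comp: "\<bar>l $ j\<bar> \<le> norm1 (l::int^'n)"
  unfolding norm1_def by (rule member_le_sum) auto

lemma norm1_uminus: "norm1 (- l) = norm1 (l::int^'n)"
  unfolding norm1_def by simp

lemma norm1_zero: "norm1 (0::int^'n) = 0"
  unfolding norm1_def by simp

lemma finite_S: "finite {l::int^'n. norm1 l = 1}"
proof -
  have "{l::int^'n. norm1 l = 1} \<subseteq> vec_lambda ` (PiE UNIV (\<lambda>_. {-1..1}))"
  proof
    fix l :: "int^'n" assume "l \<in> {l. norm1 l = 1}"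
    then have "\<forall>j. l $ j \<in> {-1..1}" using norm1_comp[of l] by (auto simp: abs_le_iff)
    then have "(\<lambda>j. l $ j) \<in> PiE UNIV (\<lambda>_. {-1..1})" by auto
    moreover have "l = vec_lambda (\<lambda>j. l $ j)" by simp
    ultimately show "l \<in> vec_lambda ` (PiE UNIV (\<lambda>_. {-1..1}))" by blast
  qed
  moreover have "finite (PiE (UNIV::'n set) (\<lambda>_. {-1..1::int}))"
    by (intro finite_PiE) auto
  ultimately show ?thesis by (meson finite_imageI finite_subset)
qed

lemma norm1_neg_unit:
  fixes l :: "int^'n"
  assumes "norm1 l = 1" "l $ j = -1"
  shows "l = - (\<chi> i. if i = j then 1 else 0)"
proof -
  have "norm1 l = \<bar>l $ j\<bar> + (\<Sum>i\<in>UNIV - {j}. \<bar>l $ i\<bar>)"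
    unfolding norm1_def by (simp add: sum.remove)
  then have "(\<Sum>i\<in>UNIV - {j}. \<bar>l $ i\<bar>) = 0" using assms by simp
  then have "\<forall>i\<in>UNIV - {j}. \<bar>l $ i\<bar> = 0"
    by (subst (asm) sum_nonneg_eq_0_iff) auto
  then show ?thesis using assms by (auto simp: vec_eq_iff)
qed

lemma finmod:
  fixes f g :: "'a \<Rightarrow> 'b::{topological_ab_group_add, t2_space}"
  assumes "f summable_on UNIV" "finite F" "\<And>x. x \<notin> F \<Longrightarrow> g x = f x"
  shows "g summable_on UNIV \<and> infsum g UNIV = infsum f UNIV + (\<Sum>x\<in>F. g x - f x)"
proof -
  define h where "h x = (if x \<in> F then g x - f x else 0)" for x
  have hs: "h summable_on UNIV"
    using summable_on_cong_neutral[where f="\<lambda>x. g x - f x" and g=h and S=F and T=UNIV] assms(2)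
    by (auto simp: h_def)
  have hi: "infsum h UNIV = (\<Sum>x\<in>F. g x - f x)"
    using infsum_cong_neutral[where f="\<lambda>x. g x - f x" and g=h and S=F and T=UNIV] assms(2)
    by (auto simp: h_def)
  have g: "g = (\<lambda>x. f x + h x)" using assms(3) by (auto simp: h_def fun_eq_iff)
  have e1: "(\<lambda>x. f x + h x) summable_on UNIV" by (rule summable_on_add[OF assms(1) hs])
  have e2: "infsum (\<lambda>x. f x + h x) UNIV = infsum f UNIV + infsum h UNIV"
    by (rule infsum_add[OF assms(1) hs])
  show ?thesis using e1 e2 hi g by metis
qed


lemma finsupp_false:
  fixes u :: "int^'n \<Rightarrow> complex" and R :: int
  assumes "u \<noteq> (\<lambda>_. 0)" "Jop d u = (\<lambda>k. z * u k)" "\<And>k. u k \<noteq> 0 \<Longrightarrow> norm1 k \<le> R"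
  shows False
proof -
  obtain j :: 'n where True by blast
  define e :: "int^'n" where "e = (\<chi> i. if i = j then 1 else 0)"
  define P where "P = {k. u k \<noteq> 0}"
  define V where "V = (\<lambda>k. k $ j) ` P"
  have "P \<noteq> {}" using assms(1) by (auto simp: P_def)
  have "V \<subseteq> {-R..R}"
  proof
    fix x assume "x \<in> V"
    then obtain k where "u k \<noteq> 0" "x = k $ j" by (auto simp: V_def P_def)
    then show "x \<in> {-R..R}" using norm1_comp[of k j] assms(3)[of k] by (auto simp: abs_le_iff)
  qed
  hence "finite V" by (rule finite_subset) simp
  have "V \<noteq> {}" using \<open>P \<noteq> {}\<close> by (simp add: V_def)
  have "Max V \<in> V" using \<open>finite V\<close> \<open>V \<noteq> {}\<close> by simp
  then obtain k where k: "u k \<noteq> 0" "k $ j = Max V" by (auto simp: V_def P_def)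
  have maxle: "m $ j \<le> Max V" if "u m \<noteq> 0" for m
    using \<open>finite V\<close> that by (auto simp: V_def P_def)
  define m where "m = k + e"
  have mj: "m $ j = Max V + 1" by (simp add: m_def e_def k)
  have um: "u m = 0" using maxle[of m] mj by force
  have "Jop d u m = z * u m" using assms(2) by simp
  hence J0m: "J0 u m = 0" using um by (simp add: Jop_def)
  have ne1: "norm1 e = 1"
  proof -
    have "norm1 e = (\<Sum>i\<in>UNIV. if i = j then 1 else 0)"
      unfolding norm1_def e_def by (intro sum.cong) auto
    also have "\<dots> = 1" by simp
    finally show ?thesis .
  qed
  have eS: "-e \<in> {l. norm1 l = 1}" using ne1 norm1_uminus[of e] by simp
  have rest: "u (m + l) = 0" if "l \<in> {l. norm1 l = 1} - {-e}" for l
  proof -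
    have l1: "norm1 l = 1" "l \<noteq> -e" using that by auto
    have "\<bar>l $ j\<bar> \<le> 1" using norm1_comp[of l j] l1 by simp
    moreover have "l $ j \<noteq> -1" using norm1_neg_unit[of l j] l1 by (auto simp: e_def)
    ultimately have "l $ j \<ge> 0" by auto
    hence "(m + l) $ j > Max V" using mj by simp
    thus ?thesis using maxle[of "m + l"] by force
  qed
  have "J0 u m = u (m + - e) + (\<Sum>l\<in>{l. norm1 l = 1} - {-e}. u (m + l))"
    unfolding J0_def using sum.remove[OF finite_S eS, of "\<lambda>l. u (m + l)"] by simp
  also have "\<dots> = u k" using rest by (simp add: m_def)
  finally show False using J0m k by simp
qed

lemma Jop_scale: "Jop d (\<lambda>m. a * v m) = (\<lambda>m. a * Jop d v m)"
  unfolding Jop_def J0_def by (auto simp: fun_eq_iff sum_distrib_left algebra_simps)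

lemma inW:
  fixes v :: "int^'n \<Rightarrow> complex"
  assumes "v \<in> l2" "(\<Sum>\<^sub>\<infinity>m. (cmod (v m))\<^sup>2) > 0"
  shows "l2_inner (Jop d v) v / of_real (\<Sum>\<^sub>\<infinity>m. (cmod (v m))\<^sup>2) \<in> numerical_range d"
proof -
  define V where "V = (\<Sum>\<^sub>\<infinity>m. (cmod (v m))\<^sup>2)"
  define s where "s = 1 / sqrt V"
  define v' where "v' = (\<lambda>m. complex_of_real s * v m)"
  have V: "V > 0" using assms(2) by (simp add: V_def)
  have sq: "(cmod (v' m))\<^sup>2 = s\<^sup>2 * (cmod (v m))\<^sup>2" for m
    by (simp add: v'_def norm_mult power_mult_distrib)
  have vs: "(\<lambda>m. (cmod (v m))\<^sup>2) summable_on UNIV" using assms(1) by (simp add: l2_def)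
  have "v' \<in> l2" unfolding l2_def using summable_on_cmult_right[OF vs, of "s\<^sup>2"] sq by simp
  moreover have "l2_norm v' = 1"
  proof -
    have "(\<Sum>\<^sub>\<infinity>m. (cmod (v' m))\<^sup>2) = s\<^sup>2 * V"
      unfolding sq V_def by (rule infsum_cmult_right') 
    also have "\<dots> = 1" using V by (simp add: s_def power_divide)
    finally show ?thesis by (simp add: l2_norm_def)
  qed
  moreover have "l2_inner (Jop d v') v' = l2_inner (Jop d v) v / of_real V"
  proof -
    have "l2_inner (Jop d v') v' = (\<Sum>\<^sub>\<infinity>m. complex_of_real (s\<^sup>2) * (Jop d v m * cnj (v m)))"
      unfolding l2_inner_def v'_def Jop_scale
      by (intro infsum_cong) (simp add: power2_eq_square algebra_simps)
    also have "\<dots> = complex_of_real (s\<^sup>2) * l2_inner (Jop d v) v"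
      unfolding l2_inner_def by (rule infsum_cmult_right')
    also have "complex_of_real (s\<^sup>2) = 1 / of_real V" using V by (simp add: s_def power_divide)
    finally show ?thesis by simp
  qed
  ultimately show ?thesis unfolding numerical_range_def V_def
    by (intro CollectI exI[of _ v']) simp
qed

lemma infsum_of_real_l2:
  assumes "(f::'a \<Rightarrow> real) summable_on UNIV"
  shows "infsum (\<lambda>m. complex_of_real (f m)) UNIV = complex_of_real (infsum f UNIV)"
  using assms has_sum_of_real_iff[of f UNIV "infsum f UNIV", where 'a=complex]
  by (simp add: infsumI)

lemma csq: "(complex_of_real (cmod x))\<^sup>2 = x * cnj x"
  by (metis complex_norm_square of_real_power)

lemma B1:
  fixes u :: "int^'n \<Rightarrow> complex" and t :: complex and k :: "int^'n"
  assumes "u \<in> l2"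
  defines "w \<equiv> (\<lambda>m. u m + t * (if m = k then 1 else 0))"
  shows "w \<in> l2 \<and> complex_of_real (\<Sum>\<^sub>\<infinity>m. (cmod (w m))\<^sup>2)
     = complex_of_real (\<Sum>\<^sub>\<infinity>m. (cmod (u m))\<^sup>2) + cnj t * u k + t * cnj (u k) + t * cnj t"
proof -
  have vs: "(\<lambda>m. (cmod (u m))\<^sup>2) summable_on UNIV" using assms(1) by (simp add: l2_def)
  have fm: "(\<lambda>m. (cmod (w m))\<^sup>2) summable_on UNIV \<and> (\<Sum>\<^sub>\<infinity>m. (cmod (w m))\<^sup>2)
     = (\<Sum>\<^sub>\<infinity>m. (cmod (u m))\<^sup>2) + (\<Sum>m\<in>{k}. (cmod (w m))\<^sup>2 - (cmod (u m))\<^sup>2)"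
    by (rule finmod[OF vs]) (auto simp: w_def)
  have "complex_of_real ((cmod (w k))\<^sup>2 - (cmod (u k))\<^sup>2) = cnj t * u k + t * cnj (u k) + t * cnj t"
    unfolding of_real_diff complex_norm_square by (simp add: w_def algebra_simps)
  then show ?thesis using fm by (simp add: l2_def)
qed

lemma Jop_add: "Jop d (\<lambda>m. u m + t * v m) = (\<lambda>m. Jop d u m + t * Jop d v m)"
  unfolding Jop_def J0_def by (auto simp: fun_eq_iff sum.distrib sum_distrib_left algebra_simps)

lemma B2:
  fixes u :: "int^'n \<Rightarrow> complex" and t :: complex and k :: "int^'n"
  assumes "u \<in> l2" "Jop d u = (\<lambda>m. z * u m)"
  defines "w \<equiv> (\<lambda>m. u m + t * (if m = k then 1 else 0))"
  shows "l2_inner (Jop d w) w = z * complex_of_real (\<Sum>\<^sub>\<infinity>m. (cmod (u m))\<^sup>2) + z * cnj t * u k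
     + t * (cnj ((z - d k) * u k) + d k * cnj (u k)) + t * cnj t * d k"
proof -
  define S where "S = {l::int^'n. norm1 l = 1}"
  have fS: "finite S" using finite_S by (simp add: S_def)
  define \<delta> where "\<delta> = (\<lambda>m::int^'n. if m = k then (1::complex) else 0)"
  define F where "F = insert k ((\<lambda>l. k - l) ` S)"
  have fF: "finite F" using fS by (simp add: F_def)
  have kF: "k \<in> F" by (simp add: F_def)
  have Jw: "Jop d w m = z * u m + t * Jop d \<delta> m" for m
    using Jop_add[of d u t \<delta>] assms(2) by (simp add: w_def \<delta>_def fun_eq_iff)
  have J0u: "J0 u k = z * u k - d k * u k"
    using fun_cong[OF assms(2), of k] by (simp add: Jop_def eq_diff_eq)
  have J0d: "J0 \<delta> m = (\<Sum>l\<in>S. if m = k - l then 1 else 0)" for m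
    unfolding J0_def S_def \<delta>_def by (intro sum.cong) (auto simp: algebra_simps)
  have Jdout: "Jop d \<delta> m = 0" if "m \<notin> F" for m
  proof -
    have "J0 \<delta> m = 0" unfolding J0d using that by (intro sum.neutral) (auto simp: F_def)
    moreover have "\<delta> m = 0" using that by (auto simp: \<delta>_def F_def)
    ultimately show ?thesis by (simp add: Jop_def)
  qed
  have Jdk: "Jop d \<delta> k = d k"
  proof -
    have "J0 \<delta> k = 0" unfolding J0d
      by (intro sum.neutral) (auto simp: S_def norm1_zero)
    thus ?thesis by (simp add: Jop_def \<delta>_def)
  qed
  have vs: "(\<lambda>m. (cmod (u m))\<^sup>2) summable_on UNIV" using assms(1) by (simp add: l2_def)
  define f where "f m = z * complex_of_real ((cmod (u m))\<^sup>2)" for m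
  have fs: "f summable_on UNIV" unfolding f_def
    by (intro summable_on_cmult_right summable_on_of_real vs)
  have fi: "infsum f UNIV = z * complex_of_real (\<Sum>\<^sub>\<infinity>m. (cmod (u m))\<^sup>2)"
    unfolding f_def infsum_cmult_right' infsum_of_real_l2[OF vs] ..
  define g where "g m = Jop d w m * cnj (w m)" for m
  have gout: "g m = f m" if "m \<notin> F" for m
    using that kF Jdout[OF that] unfolding g_def f_def Jw by (auto simp: w_def csq)
  have fm: "g summable_on UNIV \<and> infsum g UNIV = infsum f UNIV + (\<Sum>m\<in>F. g m - f m)"
    by (rule finmod[OF fs fF gout])
  have gf: "g m - f m = t * (Jop d \<delta> m * cnj (u m)) + z * cnj t * (u m * \<delta> m)
      + t * cnj t * (Jop d \<delta> m * \<delta> m)" for m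
    unfolding g_def f_def Jw by (simp add: w_def csq \<delta>_def algebra_simps)
  have s1: "(\<Sum>m\<in>F. u m * \<delta> m) = u k"
    using fF kF by (simp add: \<delta>_def if_distrib cong: if_cong)
  have s2: "(\<Sum>m\<in>F. Jop d \<delta> m * \<delta> m) = d k"
    using fF kF Jdk by (simp add: \<delta>_def if_distrib cong: if_cong)
  have s3a: "(\<Sum>m\<in>F. J0 \<delta> m * cnj (u m)) = cnj (J0 u k)"
  proof -
    have "(\<Sum>m\<in>F. J0 \<delta> m * cnj (u m)) = (\<Sum>m\<in>F. \<Sum>l\<in>S. if m = k - l then cnj (u m) else 0)"
      unfolding J0d sum_distrib_right by (intro sum.cong) auto
    also have "\<dots> = (\<Sum>l\<in>S. \<Sum>m\<in>F. if m = k - l then cnj (u m) else 0)"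
      by (rule sum.swap)
    also have "\<dots> = (\<Sum>l\<in>S. cnj (u (k - l)))"
      using fF by (intro sum.cong) (auto simp: F_def)
    also have "\<dots> = (\<Sum>l\<in>S. cnj (u (k + l)))"
      by (rule sum.reindex_bij_witness[of _ uminus uminus]) (auto simp: S_def norm1_uminus)
    also have "\<dots> = cnj (J0 u k)" by (simp add: J0_def S_def)
    finally show ?thesis .
  qed
  have s3: "(\<Sum>m\<in>F. Jop d \<delta> m * cnj (u m)) = cnj ((z - d k) * u k) + d k * cnj (u k)"
  proof -
    have "(\<Sum>m\<in>F. Jop d \<delta> m * cnj (u m)) = (\<Sum>m\<in>F. J0 \<delta> m * cnj (u m)) + (\<Sum>m\<in>F. d m * \<delta> m * cnj (u m))"
      unfolding Jop_def by (simp add: sum.distrib algebra_simps)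
    also have "(\<Sum>m\<in>F. d m * \<delta> m * cnj (u m)) = (\<Sum>m\<in>F. if m = k then d k * cnj (u k) else 0)"
      by (intro sum.cong) (auto simp: \<delta>_def)
    also have "\<dots> = d k * cnj (u k)" using fF kF by simp
    finally show ?thesis using s3a J0u by (simp add: algebra_simps)
  qed
  have sF: "(\<Sum>m\<in>F. g m - f m) = z * cnj t * u k + t * (cnj ((z - d k) * u k) + d k * cnj (u k)) + t * cnj t * d k"
    unfolding gf sum.distrib sum_distrib_left[symmetric] s1 s2 s3 by simp
  have "l2_inner (Jop d w) w = infsum g UNIV" unfolding l2_inner_def by (rule infsum_cong) (simp add: g_def)
  also have "\<dots> = infsum f UNIV + (\<Sum>m\<in>F. g m - f m)" using fm by blast
  also have "\<dots> = z * complex_of_real (\<Sum>\<^sub>\<infinity>m. (cmod (u m))\<^sup>2) + z * cnj t * u k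
     + t * (cnj ((z - d k) * u k) + d k * cnj (u k)) + t * cnj t * d k"
    unfolding fi sF by (simp add: algebra_simps)
  finally show ?thesis .
qed

lemma has_derivative_cnj'[derivative_intros]:
  "(f has_derivative f') F \<Longrightarrow> ((\<lambda>x. cnj (f x)) has_derivative (\<lambda>h. cnj (f' h))) F"
  using bounded_linear.has_derivative[OF bounded_linear_cnj] .

lemma interior_lemma:
  fixes U :: real and z b p q :: complex
  assumes U: "U > 0" and c0: "b - z * cnj p \<noteq> 0"
  defines "N \<equiv> (\<lambda>t. z * U + z * cnj t * p + t * b + t * cnj t * q)"
    and "D \<equiv> (\<lambda>t. complex_of_real U + cnj t * p + t * cnj p + t * cnj t)"
  shows "z \<in> interior ((\<lambda>t. N t / D t) ` {t. D t \<noteq> 0})"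
proof -
  define c where "c = (b - z * cnj p) / complex_of_real U"
  have c: "c \<noteq> 0" using c0 U by (simp add: c_def)
  have D0: "D 0 = complex_of_real U" by (simp add: D_def)
  have contD: "continuous_on UNIV D" unfolding D_def by (intro continuous_intros)
  have openS: "open {t. D t \<noteq> 0}"
    using contD by (simp add: open_Collect_neq continuous_on_const)
  have contf: "continuous_on {t. D t \<noteq> 0} (\<lambda>t. N t / D t)"
    unfolding N_def D_def by (intro continuous_intros) auto
  have der: "((\<lambda>t. N t / D t) has_derivative (\<lambda>h. h * c)) (at 0)"
    unfolding N_def D_def
    apply (rule derivative_eq_intros | simp)+
    using U by (auto simp: fun_eq_iff c_def field_simps)
  have "(\<lambda>t. N t / D t) 0 \<in> interior ((\<lambda>t. N t / D t) ` {t. D t \<noteq> 0})"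
  proof (rule sussmann_open_mapping[OF openS contf _ der, where g'="\<lambda>h. h / c"])
    show "0 \<in> {t. D t \<noteq> 0}" using D0 U by simp
    show "bounded_linear (\<lambda>h::complex. h / c)" by (rule bounded_linear_divide)
    show "(\<lambda>h. h * c) \<circ> (\<lambda>h. h / c) = id" using c by (auto simp: fun_eq_iff)
    show "{t. D t \<noteq> 0} \<subseteq> {t. D t \<noteq> 0}" by simp
    show "0 \<in> interior {t. D t \<noteq> 0}" using openS D0 U by (simp add: interior_open)
  qed
  moreover have "(\<lambda>t. N t / D t) 0 = z" using U by (simp add: N_def D_def)
  ultimately show ?thesis by simp
qed

theorem mainTheorem7:
  fixes d :: "int ^ 'n \<Rightarrow> complex" and z :: complex
  assumes bounded: "\<exists>C. \<forall>k. cmod (d k) \<le> C"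
    and im_decay: "\<forall>\<epsilon>>0. \<exists>R. \<forall>k. norm1 k > R \<longrightarrow> \<bar>Im (d k)\<bar> < \<epsilon>"
    and "boundary_eigenvalue d z"
  shows "z \<in> \<real>"
  proof (rule ccontr)
  assume nz: "z \<notin> \<real>"
  hence Imz: "Im z \<noteq> 0" by (simp add: complex_is_Real_iff)
  from assms(3) obtain u where u: "u \<in> l2" "u \<noteq> (\<lambda>_. 0)" "Jop d u = (\<lambda>k. z * u k)"
    and fr: "z \<in> frontier (numerical_range d)"
    unfolding boundary_eigenvalue_def is_eigenvalue_def by blast
  show False
  proof (cases "\<exists>k. u k \<noteq> 0 \<and> Im (d k) \<noteq> Im z")
    case True
    then obtain k where k: "u k \<noteq> 0" "Im (d k) \<noteq> Im z" by blast
    define U where "U = (\<Sum>\<^sub>\<infinity>m. (cmod (u m))\<^sup>2)"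
    have vs: "(\<lambda>m. (cmod (u m))\<^sup>2) summable_on UNIV" using u(1) by (simp add: l2_def)
    have "U > 0"
    proof -
      have fm: "(\<lambda>m. if m = k then 0 else (cmod (u m))\<^sup>2) summable_on UNIV \<and>
          (\<Sum>\<^sub>\<infinity>m. if m = k then 0 else (cmod (u m))\<^sup>2) = U + (\<Sum>m\<in>{k}. (if m = k then 0 else (cmod (u m))\<^sup>2) - (cmod (u m))\<^sup>2)"
        unfolding U_def by (rule finmod[OF vs]) auto
      have "(\<Sum>\<^sub>\<infinity>m. if m = k then 0 else (cmod (u m))\<^sup>2) \<ge> 0" by (rule infsum_nonneg) auto
      then have le: "(cmod (u k))\<^sup>2 \<le> U" using fm by simp
      have pos: "(cmod (u k))\<^sup>2 > 0" using k(1) by simp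
      show ?thesis using le pos by linarith
    qed
    define b where "b = cnj ((z - d k) * u k) + d k * cnj (u k)"
    have bid: "b - z * cnj (u k) = cnj (u k) * (2 * \<i> * complex_of_real (Im (d k) - Im z))"
      by (simp add: b_def complex_eq_iff algebra_simps)
    have c0: "b - z * cnj (u k) \<noteq> 0" unfolding bid using k by simp
    define N where "N = (\<lambda>t. z * U + z * cnj t * u k + t * b + t * cnj t * d k)"
    define D where "D = (\<lambda>t. complex_of_real U + cnj t * u k + t * cnj (u k) + t * cnj t)"
    have int: "z \<in> interior ((\<lambda>t. N t / D t) ` {t. D t \<noteq> 0})"
      unfolding N_def D_def by (rule interior_lemma[OF \<open>U > 0\<close> c0])
    have sub: "(\<lambda>t. N t / D t) ` {t. D t \<noteq> 0} \<subseteq> numerical_range d"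
    proof
      fix x assume "x \<in> (\<lambda>t. N t / D t) ` {t. D t \<noteq> 0}"
      then obtain t where t: "D t \<noteq> 0" "x = N t / D t" by blast
      define w where "w = (\<lambda>m. u m + t * (if m = k then 1 else 0))"
      have b1: "w \<in> l2 \<and> complex_of_real (\<Sum>\<^sub>\<infinity>m. (cmod (w m))\<^sup>2) = D t"
        using B1[OF u(1), of t k] unfolding w_def D_def U_def by simp
      have b2: "l2_inner (Jop d w) w = N t"
        using B2[OF u(1) u(3), of t k] unfolding w_def N_def U_def b_def by simp
      have "(\<Sum>\<^sub>\<infinity>m. (cmod (w m))\<^sup>2) \<ge> 0" by (rule infsum_nonneg) auto
      moreover have "(\<Sum>\<^sub>\<infinity>m. (cmod (w m))\<^sup>2) \<noteq> 0" using b1 t(1) by auto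
      ultimately have "(\<Sum>\<^sub>\<infinity>m. (cmod (w m))\<^sup>2) > 0" by simp
      from inW[OF _ this, of d] b1 b2 t(2) show "x \<in> numerical_range d" by simp
    qed
    have "z \<in> interior (numerical_range d)" using int interior_mono[OF sub] by blast
    then show False using fr by (simp add: frontier_def)
  next
    case False
    obtain R where R: "\<forall>k. norm1 k > R \<longrightarrow> \<bar>Im (d k)\<bar> < \<bar>Im z\<bar>"
      using im_decay Imz by (meson zero_less_abs_iff)
    have "norm1 k \<le> R" if "u k \<noteq> 0" for k
    proof -
      have "Im (d k) = Im z" using False that by blast
      then show ?thesis using R[rule_format, of k] by force
    qed
    then show False using finsupp_false[OF u(2) u(3)] by blast
  qed
qed


end
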